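(* For every $n\in\mathbb N$, $\mathrm{Ind}_{\mathrm B}(\ell_\infty(n):\mathbb C1_n)=n$, where $1_n=(1,\dots,1)\in\ell_\infty(n)$.
   Context: $\ell_\infty(n)$ is $\mathbb C^n$ with the sup norm. For a closed subspace $X_0$ of a Banach space $X$, the bounded index is $\mathrm{Ind}_{\mathrm B}(X:X_0)=\inf\{\|T\|:T\in\mathcal L(X,X_0),\ \|T-\mathrm{id}_X\|\le\|T\|-1\}$, where $\mathcal L(X,X_0)$ denotes bounded linear maps $X\to X_0$ (regarded as maps into $X$); equivalently $\mathrm{Ind}_{\mathrm B}(X:X_0)^{-1}=\sup\{\lambda\ge0:\exists T\in\mathcal L(X,X_0),\ \|T\|=1,\ \|T-\lambda\,\mathrm{id}_X\|\le1-\lambda\}$. *)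

theory Defs
  imports "HOL-Analysis.Analysis"
begin

text \<open>ell_infinity(n): functions from a finite index type 'n (with CARD('n) = n) to complex,
  equipped with the sup norm.\<close>

definition supnorm :: "('n::finite \<Rightarrow> complex) \<Rightarrow> real" where
  "supnorm x = Max (range (\<lambda>i. cmod (x i)))"

definition bounded_clinear_map :: "(('n::finite \<Rightarrow> complex) \<Rightarrow> ('n \<Rightarrow> complex)) \<Rightarrow> bool" where
  "bounded_clinear_map T \<longleftrightarrow>
     (\<forall>x y. T (\<lambda>i. x i + y i) = (\<lambda>i. T x i + T y i)) \<and>
     (\<forall>c x. T (\<lambda>i. c * x i) = (\<lambda>i. c * T x i)) \<and>
     (\<exists>K. \<forall>x. supnorm (T x) \<le> K * supnorm x)"

definition opnorm :: "(('n::finite \<Rightarrow> complex) \<Rightarrow> ('n \<Rightarrow> complex)) \<Rightarrow> real" where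
  "opnorm T = Sup ((\<lambda>x. supnorm (T x)) ` {x. supnorm x \<le> 1})"

definition bounded_index :: "('n::finite \<Rightarrow> complex) set \<Rightarrow> real" where
  "bounded_index X0 = Inf {opnorm T | T. bounded_clinear_map T \<and> range T \<subseteq> X0 \<and>
       opnorm (\<lambda>x i. T x i - x i) \<le> opnorm T - 1}"

end

theory Submission
  imports Defs
begin

lemma supnorm_ge: "cmod (x i) \<le> supnorm x"
  unfolding supnorm_def by (rule Max_ge) auto

lemma supnorm_le: "(\<And>i. cmod (x i) \<le> c) \<Longrightarrow> supnorm x \<le> c"
  unfolding supnorm_def by (subst Max_le_iff) auto

lemma supnorm_nonneg: "0 \<le> supnorm x"
  using supnorm_ge[of x undefined] norm_ge_zero order_trans by blast

lemma opnorm_upper: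
  assumes "\<And>x. supnorm (F x) \<le> K * supnorm x" "K \<ge> 0" "supnorm x \<le> 1"
  shows "supnorm (F x) \<le> opnorm F"
  unfolding opnorm_def
proof (rule cSup_upper)
  show "supnorm (F x) \<in> (\<lambda>x. supnorm (F x)) ` {x. supnorm x \<le> 1}" using assms(3) by auto
  show "bdd_above ((\<lambda>x. supnorm (F x)) ` {x. supnorm x \<le> 1})"
  proof (rule bdd_aboveI2)
    fix y :: "'a \<Rightarrow> complex" assume "y \<in> {x. supnorm x \<le> 1}"
    then have "K * supnorm y \<le> K * 1" using assms(2) by (intro mult_left_mono) auto
    then show "supnorm (F y) \<le> K" using assms(1)[of y] by simp
  qed
qed

lemma opnorm_least:
  assumes "\<And>x. supnorm x \<le> 1 \<Longrightarrow> supnorm (F x) \<le> c"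
  shows "opnorm F \<le> c"
  unfolding opnorm_def
proof (rule cSup_least)
  have "supnorm (\<lambda>i::'a. 0::complex) \<le> 1" by (rule supnorm_le) auto
  then show "(\<lambda>x. supnorm (F x)) ` {x. supnorm x \<le> 1} \<noteq> {}" by blast
  show "\<And>y. y \<in> (\<lambda>x. supnorm (F x)) ` {x. supnorm x \<le> 1} \<Longrightarrow> y \<le> c" using assms by auto
qed

lemma linear_sum:
  assumes "bounded_clinear_map T" "finite S"
  shows "T (\<lambda>k. \<Sum>j\<in>S. x j * (if k = j then 1 else 0)) = (\<lambda>k. \<Sum>j\<in>S. x j * T (\<lambda>k. if k = j then 1 else 0) k)"
  using assms(2)
proof (induction S rule: finite_induct)
  case empty
  have h: "\<And>c x. T (\<lambda>i. c * x i) = (\<lambda>i. c * T x i)" using assms(1) unfolding bounded_clinear_map_def by blast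
  show ?case using h[of 0 "\<lambda>i. 0"] by simp
next
  case (insert a S)
  have add: "\<And>x y. T (\<lambda>i. x i + y i) = (\<lambda>i. T x i + T y i)" and hom: "\<And>c x. T (\<lambda>i. c * x i) = (\<lambda>i. c * T x i)"
    using assms(1) unfolding bounded_clinear_map_def by blast+
  have "T (\<lambda>k. \<Sum>j\<in>insert a S. x j * (if k = j then 1 else 0))
     = T (\<lambda>k. x a * (if k = a then 1 else 0) + (\<Sum>j\<in>S. x j * (if k = j then 1 else 0)))"
    using insert by simp
  also have "\<dots> = (\<lambda>k. T (\<lambda>k. x a * (if k = a then 1 else 0)) k + T (\<lambda>k. \<Sum>j\<in>S. x j * (if k = j then 1 else 0)) k)"
    by (rule add)
  also have "\<dots> = (\<lambda>k. \<Sum>j\<in>insert a S. x j * T (\<lambda>k. if k = j then 1 else 0) k)"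
    using insert by (simp add: hom)
  finally show ?case .
qed

lemma linear_repr:
  assumes "bounded_clinear_map (T :: ('n::finite \<Rightarrow> complex) \<Rightarrow> _)"
  shows "T x = (\<lambda>k. \<Sum>j\<in>UNIV. x j * T (\<lambda>k. if k = j then 1 else 0) k)"
proof -
  have "x = (\<lambda>k. \<Sum>j\<in>UNIV. x j * (if k = j then 1 else 0))"
    by (simp add: if_distrib cong: if_cong)
  then show ?thesis using linear_sum[OF assms, of UNIV x] by simp
qed

lemma cnj_sgn_mult: "cnj (sgn z) * z = complex_of_real (cmod z)"
proof (cases "z = 0")
  case False
  have "cnj (sgn z) * z = (cnj z * z) / complex_of_real (cmod z)"
    by (simp add: sgn_div_norm divide_complex_def scaleR_conv_of_real)
  also have "cnj z * z = complex_of_real (cmod z) ^ 2" using complex_norm_square[of z] by (simp add: mult.commute)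
  finally show ?thesis using False by (simp add: power2_eq_square)
qed simp

lemma cmod_cnj_sgn_le: "cmod (cnj (sgn z)) \<le> 1"
  by (cases "z = 0") (simp_all add: norm_sgn)

lemma partB:
  fixes T :: "('n::finite \<Rightarrow> complex) \<Rightarrow> ('n \<Rightarrow> complex)"
  assumes lin: "bounded_clinear_map T" and rng: "range T \<subseteq> range (\<lambda>c::complex. (\<lambda>i::'n. c))"
    and cond: "opnorm (\<lambda>x i. T x i - x i) \<le> opnorm T - 1"
  shows "real CARD('n) \<le> opnorm T"
proof -
  define a where "a j = T (\<lambda>k. if k = j then 1 else 0) undefined" for j
  have const: "T y k = T y undefined" for y k
  proof -
    obtain c where "T y = (\<lambda>i. c)" using rng by blast
    then show ?thesis by simp
  qed
  have repr: "T x k = (\<Sum>j\<in>UNIV. x j * a j)" for x k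
  proof -
    have "T x k = (\<Sum>j\<in>UNIV. x j * T (\<lambda>k. if k = j then 1 else 0) k)"
      using fun_cong[OF linear_repr[OF lin, of x], of k] by simp
    also have "\<dots> = (\<Sum>j\<in>UNIV. x j * a j)" unfolding a_def using const by (intro sum.cong) auto
    finally show ?thesis .
  qed
  define A where "A = (\<Sum>j\<in>UNIV. cmod (a j))"
  have A0: "0 \<le> A" unfolding A_def by (simp add: sum_nonneg)
  have bndT: "supnorm (T x) \<le> A * supnorm x" for x
  proof (rule supnorm_le)
    fix k
    have "cmod (T x k) \<le> (\<Sum>j\<in>UNIV. cmod (x j * a j))" unfolding repr by (rule norm_sum)
    also have "\<dots> \<le> (\<Sum>j\<in>UNIV. supnorm x * cmod (a j))"
      by (intro sum_mono) (simp add: norm_mult mult_right_mono supnorm_ge)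
    also have "\<dots> = A * supnorm x" unfolding A_def by (simp add: sum_distrib_left mult.commute)
    finally show "cmod (T x k) \<le> A * supnorm x" .
  qed
  define xs where "xs j = cnj (sgn (a j))" for j
  have "supnorm xs \<le> 1" unfolding xs_def by (rule supnorm_le) (rule cmod_cnj_sgn_le)
  then have "supnorm (T xs) \<le> opnorm T" by (rule opnorm_upper[OF bndT A0])
  moreover have "cmod (T xs undefined) = A"
    unfolding repr xs_def A_def cnj_sgn_mult of_real_sum[symmetric] norm_of_real
    by (simp add: sum_nonneg)
  ultimately have AleT: "A \<le> opnorm T" using supnorm_ge[of "T xs" undefined] by linarith
  have bnd2: "supnorm (T x - x) \<le> (A + 1) * supnorm x" for x
  proof (rule supnorm_le)
    fix k
    have "cmod ((T x - x) k) \<le> cmod (T x k) + cmod (x k)" by (simp add: norm_triangle_ineq4)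
    also have "\<dots> \<le> A * supnorm x + supnorm x"
      using supnorm_ge[of "T x" k] supnorm_ge[of x k] bndT[of x] by linarith
    finally show "cmod ((T x - x) k) \<le> (A + 1) * supnorm x" by (simp add: algebra_simps)
  qed
  have ai: "1 \<le> cmod (a i)" for i
  proof -
    define y where "y j = (if j = i then cnj (sgn (a i - 1)) else cnj (sgn (a j)))" for j
    have "supnorm y \<le> 1" unfolding y_def by (rule supnorm_le) (simp add: norm_sgn)
    then have u1: "supnorm (T y - y) \<le> opnorm (\<lambda>x. T x - x)"
      using opnorm_upper[where F="\<lambda>x. T x - x" and K="A+1", OF bnd2] A0 by simp
    have eq: "(\<lambda>x. T x - x) = (\<lambda>x i. T x i - x i)" by (auto simp: fun_eq_iff)
    have "T y i - y i = complex_of_real ((A - cmod (a i)) + cmod (a i - 1))"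
    proof -
      have "T y i - y i = (y i * a i - y i) + (\<Sum>j\<in>UNIV-{i}. y j * a j)"
        unfolding repr by (simp add: sum.remove[of UNIV i])
      also have "y i * a i - y i = cnj (sgn (a i - 1)) * (a i - 1)" by (simp add: y_def algebra_simps)
      also have "(\<Sum>j\<in>UNIV-{i}. y j * a j) = (\<Sum>j\<in>UNIV-{i}. complex_of_real (cmod (a j)))"
        by (intro sum.cong) (auto simp: y_def cnj_sgn_mult)
      also have "A = cmod (a i) + (\<Sum>j\<in>UNIV-{i}. cmod (a j))"
        unfolding A_def by (simp add: sum.remove[of UNIV i])
      ultimately show ?thesis by (simp add: cnj_sgn_mult)
    qed
    then have "cmod ((T y - y) i) = \<bar>(A - cmod (a i)) + cmod (a i - 1)\<bar>"
      by (simp only: fun_diff_def norm_of_real)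
    moreover have "cmod (a i) \<le> A" unfolding A_def
      by (rule member_le_sum) auto
    ultimately have "cmod ((T y - y) i) = (A - cmod (a i)) + cmod (a i - 1)" by simp
    then have "(A - cmod (a i)) + cmod (a i - 1) \<le> opnorm T - 1"
      using supnorm_ge[of "T y - y" i] cond u1 eq by simp
    moreover have "opnorm T \<le> A"
      proof (rule opnorm_least)
      fix x :: "'n \<Rightarrow> complex" assume "supnorm x \<le> 1"
      then have "A * supnorm x \<le> A * 1" using A0 by (intro mult_left_mono)
      then show "supnorm (T x) \<le> A" using bndT[of x] by simp
    qed
    ultimately show ?thesis using norm_ge_zero[of "a i - 1"] by linarith
  qed
  have "real CARD('n) = (\<Sum>j\<in>(UNIV::'n set). 1)" by simp
  also have "\<dots> \<le> A" unfolding A_def by (intro sum_mono ai)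
  finally show ?thesis using AleT by linarith
qed

lemma partA:
  defines "T0 \<equiv> (\<lambda>(x::'n::finite \<Rightarrow> complex) (i::'n). \<Sum>j\<in>UNIV. x j)"
  shows "bounded_clinear_map T0" "range T0 \<subseteq> range (\<lambda>c::complex. (\<lambda>i::'n. c))"
    "opnorm T0 = real CARD('n)" "opnorm (\<lambda>x i. T0 x i - x i) \<le> opnorm T0 - 1"
proof -
  have bnd: "supnorm (T0 x) \<le> real CARD('n) * supnorm x" for x
  proof (rule supnorm_le)
    fix i
    have "cmod (T0 x i) \<le> (\<Sum>j\<in>UNIV. cmod (x j))" unfolding T0_def by (simp add: norm_sum)
    also have "\<dots> \<le> (\<Sum>j\<in>(UNIV::'n set). supnorm x)" by (intro sum_mono supnorm_ge)
    finally show "cmod (T0 x i) \<le> real CARD('n) * supnorm x" by simp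
  qed
  show "bounded_clinear_map T0"
    unfolding bounded_clinear_map_def using bnd
    by (auto simp: T0_def sum.distrib sum_distrib_left)
  show "range T0 \<subseteq> range (\<lambda>c::complex. (\<lambda>i::'n. c))" unfolding T0_def by auto
  have le: "opnorm T0 \<le> real CARD('n)"
  proof (rule opnorm_least)
    fix x :: "'n \<Rightarrow> complex" assume "supnorm x \<le> 1"
    then have "real CARD('n) * supnorm x \<le> real CARD('n) * 1" by (intro mult_left_mono) auto
    then show "supnorm (T0 x) \<le> real CARD('n)" using bnd[of x] by linarith
  qed
  have "supnorm (\<lambda>i::'n. 1::complex) \<le> 1" by (rule supnorm_le) simp
  then have "supnorm (T0 (\<lambda>i. 1)) \<le> opnorm T0" using opnorm_upper[where F=T0 and K="real CARD('n)", OF bnd] by simp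
  moreover have "cmod (T0 (\<lambda>i. 1) undefined) = real CARD('n)" unfolding T0_def by simp
  ultimately show eq: "opnorm T0 = real CARD('n)" using le supnorm_ge[of "T0 (\<lambda>i. 1)" undefined] by linarith
  show "opnorm (\<lambda>x i. T0 x i - x i) \<le> opnorm T0 - 1"
    unfolding eq
  proof (rule opnorm_least)
    fix x :: "'n \<Rightarrow> complex" assume x1: "supnorm x \<le> 1"
    show "supnorm (\<lambda>i. T0 x i - x i) \<le> real CARD('n) - 1"
    proof (rule supnorm_le)
      fix i
      have "T0 x i - x i = (\<Sum>j\<in>UNIV-{i}. x j)" unfolding T0_def by (simp add: sum.remove[of UNIV i])
      then have "cmod (T0 x i - x i) \<le> (\<Sum>j\<in>UNIV-{i}. cmod (x j))" by (simp add: norm_sum)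
      also have "\<dots> \<le> (\<Sum>j\<in>UNIV-{i}. 1)" using x1 supnorm_ge[of x] order_trans
        by (intro sum_mono) blast
      also have "\<dots> = real CARD('n) - 1"
        using card_Diff_singleton[of i "UNIV::'n set"] finite_UNIV_card_ge_0[where 'a='n]
        by (simp add: of_nat_diff)
      finally show "cmod (T0 x i - x i) \<le> real CARD('n) - 1" .
    qed
  qed
qed

theorem mainTheorem19:
  shows "bounded_index (range (\<lambda>c::complex. (\<lambda>i::'n::finite. c))) = real CARD('n)"
  unfolding bounded_index_def
proof (rule cInf_eq_minimum)
  let ?T0 = "(\<lambda>(x::'n::finite \<Rightarrow> complex) (i::'n). \<Sum>j\<in>UNIV. x j)"
  show "real CARD('n) \<in> {opnorm T |T. bounded_clinear_map T \<and> range T \<subseteq> range (\<lambda>c::complex. (\<lambda>i::'n. c)) \<and>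
       opnorm (\<lambda>x i. T x i - x i) \<le> opnorm T - 1}"
    using partA[where 'n='n] by (intro CollectI exI[of _ ?T0]) auto
  show "\<And>x. x \<in> {opnorm T |T. bounded_clinear_map T \<and> range T \<subseteq> range (\<lambda>c::complex. (\<lambda>i::'n. c)) \<and>
       opnorm (\<lambda>x i. T x i - x i) \<le> opnorm T - 1} \<Longrightarrow> real CARD('n) \<le> x"
    using partB by blast
qed

end
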